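(* Let $G$ be a connected finite simple undirected graph with $n$ vertices, let $S$ be a balanced separator of $G$ of minimum cardinality, and let $\pi$ be any vertex order of $G$. Then $G_\pi^*$ contains a clique $Q$ with at least $|S|$ vertices, and there are at least $n/3$ vertices $u$ of $G$ such that every vertex of $Q$ belongs to the search space $\mathrm{SS}(u)$ (so that $Q$, with all its arcs, is a subgraph of $\mathrm{SS}(u)$).
   Context: Let $G=(V,E)$ be a finite simple undirected graph with $n=|V|$ vertices. A vertex order is a bijection $\pi:\{1,\dots,n\}\to V$; the rank of $v$ is $\pi^{-1}(v)$. Contracting a vertex $v$ in a graph means deleting $v$ and its incident edges and adding an edge between every pair of former neighbors of $v$ that are not already adjacent. The core graph $G_{\pi,i}$ is obtained from $G$ by contracting $\pi(1),\dots,\pi(i-1)$ in this order. $G_\pi^*$ is the graph on $V$ whose edge set is the union of the edge sets of all $G_{\pi,i}$, $i=1,\dots,n$ (i.e. $G$ together with all edges inserted during the contractions). $G_\pi^\wedge$ is the directed graph obtained from $G_\pi^*$ by orienting every edge from its endpoint of lower rank to its endpoint of higher rank. The search space $\mathrm{SS}(v)$ is the subgraph of $G_\pi^\wedge$ induced by the set of vertices reachable from $v$ in $G_\pi^\wedge$ (including $v$). A balanced separator of a graph with vertex set $V$, $|V|=n$, is a set $S\subseteq V$ such that $V\setminus S$ can be partitioned into sets $A,B$ (possibly empty) with no edge between $A$ and $B$ and $|A|,|B|\le 2n/3$. *)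

theory Defs
  imports Main
begin

definition simple_graph :: "'a set \<Rightarrow> 'a set set \<Rightarrow> bool" where
  "simple_graph V E \<longleftrightarrow> finite V \<and>
     (\<forall>e\<in>E. \<exists>x y. e = {x, y} \<and> x \<noteq> y \<and> x \<in> V \<and> y \<in> V)"

definition adj_rel :: "'a set set \<Rightarrow> ('a \<times> 'a) set" where
  "adj_rel E = {(x, y). {x, y} \<in> E \<and> x \<noteq> y}"

definition connected_graph :: "'a set \<Rightarrow> 'a set set \<Rightarrow> bool" where
  "connected_graph V E \<longleftrightarrow> (\<forall>u\<in>V. \<forall>v\<in>V. (u, v) \<in> (adj_rel E)\<^sup>*)"

definition balanced_separator :: "'a set \<Rightarrow> 'a set set \<Rightarrow> 'a set \<Rightarrow> bool" where
  "balanced_separator V E S \<longleftrightarrow> S \<subseteq> V \<and>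
     (\<exists>A B. A \<union> B = V - S \<and> A \<inter> B = {} \<and>
        (\<forall>a\<in>A. \<forall>b\<in>B. {a, b} \<notin> E) \<and>
        3 * card A \<le> 2 * card V \<and> 3 * card B \<le> 2 * card V)"

definition min_balanced_separator :: "'a set \<Rightarrow> 'a set set \<Rightarrow> 'a set \<Rightarrow> bool" where
  "min_balanced_separator V E S \<longleftrightarrow> balanced_separator V E S \<and>
     (\<forall>S'. balanced_separator V E S' \<longrightarrow> card S \<le> card S')"

definition vertex_order :: "'a set \<Rightarrow> (nat \<Rightarrow> 'a) \<Rightarrow> bool" where
  "vertex_order V \<pi> \<longleftrightarrow> bij_betw \<pi> {1..card V} V"

definition rank :: "'a set \<Rightarrow> (nat \<Rightarrow> 'a) \<Rightarrow> 'a \<Rightarrow> nat" where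
  "rank V \<pi> v = inv_into {1..card V} \<pi> v"

definition contract :: "'a set \<times> 'a set set \<Rightarrow> 'a \<Rightarrow> 'a set \<times> 'a set set" where
  "contract G v = (fst G - {v},
     {e \<in> snd G. v \<notin> e} \<union>
     {{x, y} | x y. x \<noteq> y \<and> {v, x} \<in> snd G \<and> {v, y} \<in> snd G})"

primrec core_aux :: "'a set \<Rightarrow> 'a set set \<Rightarrow> (nat \<Rightarrow> 'a) \<Rightarrow> nat \<Rightarrow> 'a set \<times> 'a set set" where
  "core_aux V E \<pi> 0 = (V, E)"
| "core_aux V E \<pi> (Suc k) = contract (core_aux V E \<pi> k) (\<pi> (Suc k))"

definition core_graph :: "'a set \<Rightarrow> 'a set set \<Rightarrow> (nat \<Rightarrow> 'a) \<Rightarrow> nat \<Rightarrow> 'a set \<times> 'a set set" where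
  "core_graph V E \<pi> i = core_aux V E \<pi> (i - 1)"

definition star_edges :: "'a set \<Rightarrow> 'a set set \<Rightarrow> (nat \<Rightarrow> 'a) \<Rightarrow> 'a set set" where
  "star_edges V E \<pi> = (\<Union>i\<in>{1..card V}. snd (core_graph V E \<pi> i))"

definition up_arcs :: "'a set \<Rightarrow> 'a set set \<Rightarrow> (nat \<Rightarrow> 'a) \<Rightarrow> ('a \<times> 'a) set" where
  "up_arcs V E \<pi> = {(u, v). {u, v} \<in> star_edges V E \<pi> \<and> u \<noteq> v \<and> rank V \<pi> u < rank V \<pi> v}"

definition search_space :: "'a set \<Rightarrow> 'a set set \<Rightarrow> (nat \<Rightarrow> 'a) \<Rightarrow> 'a \<Rightarrow> 'a set" where
  "search_space V E \<pi> v = {w. (v, w) \<in> (up_arcs V E \<pi>)\<^sup>*}"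

definition is_clique :: "'a set \<Rightarrow> 'a set set \<Rightarrow> 'a set \<Rightarrow> bool" where
  "is_clique V E Q \<longleftrightarrow> Q \<subseteq> V \<and> (\<forall>x\<in>Q. \<forall>y\<in>Q. x \<noteq> y \<longrightarrow> {x, y} \<in> E)"

end

theory Submission
  imports Defs
begin

inductive thr :: "'a set set \<Rightarrow> 'a set \<Rightarrow> 'a \<Rightarrow> 'a \<Rightarrow> bool" for E T where
  base: "{x,y} \<in> E \<Longrightarrow> thr E T x y"
| step: "thr E T x z \<Longrightarrow> z \<in> T \<Longrightarrow> {z,y} \<in> E \<Longrightarrow> thr E T x y"

lemma thr_trans: "thr E T z y \<Longrightarrow> thr E T x z \<Longrightarrow> z \<in> T \<Longrightarrow> thr E T x y"
  by (induction rule: thr.induct) (auto intro: thr.intros)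

lemma thr_sym: "thr E T x y \<Longrightarrow> thr E T y x"
proof (induction rule: thr.induct)
  case (base x y) then show ?case by (simp add: insert_commute thr.base)
next
  case (step x z y)
  have "thr E T y z" using step(3) by (simp add: insert_commute thr.base)
  then show ?case using thr_trans[OF step.IH _ step(2)] by blast
qed

lemma thr_mono: "thr E T x y \<Longrightarrow> T \<subseteq> T' \<Longrightarrow> thr E T' x y"
  by (induction rule: thr.induct) (auto intro: thr.intros)

lemma thr_split: "thr E (insert v T) x y \<Longrightarrow>
   thr E T x y \<or> ((x = v \<or> thr E T x v) \<and> thr E T v y)"
proof (induction rule: thr.induct)
  case (base x y) then show ?case by (auto intro: thr.base)
next
  case (step x z y)
  then show ?case by (auto intro: thr.intros)
qed

lemma thr_empty: "thr E {} x y \<Longrightarrow> {x,y} \<in> E"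
  by (cases rule: thr.cases) auto

definition compo :: "'a set set \<Rightarrow> 'a set \<Rightarrow> 'a \<Rightarrow> 'a set" where
  "compo E T y = {z \<in> T. z = y \<or> thr E T y z}"

lemma comp_eq: "z \<in> T \<Longrightarrow> y \<in> T \<Longrightarrow> z \<in> compo E T y \<Longrightarrow> compo E T z = compo E T y"
  unfolding compo_def by (auto intro: thr_trans thr_sym)

lemma conn_thr:
  assumes sg: "simple_graph V E"
  shows "(y,z) \<in> (adj_rel E)\<^sup>* \<Longrightarrow> y = z \<or> thr E V y z"
proof (induction rule: rtrancl_induct)
  case base then show ?case by simp
next
  case (step z z')
  then have e: "{z,z'} \<in> E" by (simp add: adj_rel_def)
  then have "z \<in> V" using sg unfolding simple_graph_def by (auto simp: doubleton_eq_iff)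
  then show ?case using step e by (auto intro: thr.intros)
qed

lemma pi_notin:
  assumes inj: "inj_on \<pi> {1..n}" and k: "Suc k \<le> n"
  shows "\<pi> (Suc k) \<notin> \<pi> ` {1..k}"
proof
  assume "\<pi> (Suc k) \<in> \<pi> ` {1..k}"
  then obtain j where j: "j \<in> {1..k}" "\<pi> j = \<pi> (Suc k)" by auto
  have "j = Suc k" using inj_onD[OF inj j(2)] j(1) k by auto
  then show False using j(1) by simp
qed

lemma core_edge:
  assumes inj: "inj_on \<pi> {1..n}"
  shows "k \<le> n \<Longrightarrow> x \<noteq> y \<Longrightarrow> x \<notin> \<pi> ` {1..k} \<Longrightarrow> y \<notin> \<pi> ` {1..k}
    \<Longrightarrow> thr E (\<pi> ` {1..k}) x y \<Longrightarrow> {x,y} \<in> snd (core_aux V E \<pi> k)"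
proof (induction k arbitrary: x y)
  case 0
  then show ?case by (simp add: thr_empty)
next
  case (Suc k)
  let ?v = "\<pi> (Suc k)"
  let ?T = "\<pi> ` {1..k}"
  have T: "\<pi> ` {1..Suc k} = insert ?v ?T" by (auto simp: atLeastAtMostSuc_conv)
  have vnot: "?v \<notin> ?T" by (rule pi_notin[OF inj Suc.prems(1)])
  have xv: "x \<noteq> ?v" "y \<noteq> ?v" "x \<notin> ?T" "y \<notin> ?T" using Suc.prems T by auto
  from thr_split[of E ?v ?T x y] Suc.prems(5) T
  have "thr E ?T x y \<or> ((x = ?v \<or> thr E ?T x ?v) \<and> thr E ?T ?v y)" by simp
  then show ?case
  proof
    assume "thr E ?T x y"
    then have "{x,y} \<in> snd (core_aux V E \<pi> k)" using Suc.IH[of x y] Suc.prems xv by auto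
    then show ?thesis using xv by (simp add: contract_def)
  next
    assume h: "(x = ?v \<or> thr E ?T x ?v) \<and> thr E ?T ?v y"
    then have "{x,?v} \<in> snd (core_aux V E \<pi> k)" "{?v,y} \<in> snd (core_aux V E \<pi> k)"
      using Suc.IH Suc.prems xv vnot by auto
    then have "{v,x} \<in> snd (core_aux V E \<pi> k) \<and> {v,y} \<in> snd (core_aux V E \<pi> k)" if "v = ?v" for v
      using that by (simp add: insert_commute)
    then have "{x,y} \<in> {{a, b} |a b. a \<noteq> b \<and> {?v, a} \<in> snd (core_aux V E \<pi> k) \<and> {?v, b} \<in> snd (core_aux V E \<pi> k)}"
      using Suc.prems(2) by blast
    then show ?thesis by (simp add: contract_def)
  qed
qed


lemma vo_facts:
  assumes "vertex_order V \<pi>"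
  shows "inj_on \<pi> {1..card V}" "\<pi> ` {1..card V} = V" "finite V"
  using assms unfolding vertex_order_def bij_betw_def
  by (auto, metis finite_atLeastAtMost finite_imageI)

lemma rank_pi:
  assumes "vertex_order V \<pi>" "k \<in> {1..card V}"
  shows "rank V \<pi> (\<pi> k) = k"
  using vo_facts[OF assms(1)] assms(2) by (simp add: rank_def inv_into_f_f)

lemma rank_V:
  assumes "vertex_order V \<pi>" "w \<in> V"
  shows "rank V \<pi> w \<in> {1..card V}" "\<pi> (rank V \<pi> w) = w"
proof -
  have "w \<in> \<pi> ` {1..card V}" using vo_facts(2)[OF assms(1)] assms(2) by simp
  then show "rank V \<pi> w \<in> {1..card V}" "\<pi> (rank V \<pi> w) = w"
    unfolding rank_def by (rule inv_into_into, rule f_inv_into_f)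
qed

lemma rank_gt:
  assumes "vertex_order V \<pi>" "w \<in> V" "w \<notin> \<pi> ` {1..k}"
  shows "k < rank V \<pi> w"
proof (rule ccontr)
  assume "\<not> k < rank V \<pi> w"
  then have "rank V \<pi> w \<in> {1..k}" using rank_V(1)[OF assms(1,2)] by auto
  then have "\<pi> (rank V \<pi> w) \<in> \<pi> ` {1..k}" by blast
  then show False using rank_V(2)[OF assms(1,2)] assms(3) by simp
qed

lemma rank_le:
  assumes "vertex_order V \<pi>" "u \<in> \<pi> ` {1..k}" "k \<le> card V"
  shows "rank V \<pi> u \<le> k"
proof -
  obtain j where "j \<in> {1..k}" "u = \<pi> j" using assms(2) by auto
  then show ?thesis using rank_pi[OF assms(1), of j] assms(3) by auto
qed

lemma edge_up:
  assumes "{u,w} \<in> snd (core_aux V E \<pi> j)" "Suc j \<le> card V" "u \<noteq> w"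
    "rank V \<pi> u < rank V \<pi> w"
  shows "(u,w) \<in> up_arcs V E \<pi>"
proof -
  have "{u,w} \<in> star_edges V E \<pi>"
    unfolding star_edges_def core_graph_def using assms(1,2)
    by (intro UN_I[of "Suc j"]) auto
  then show ?thesis using assms by (simp add: up_arcs_def)
qed

lemma up_path:
  assumes vo: "vertex_order V \<pi>"
  shows "k \<le> card V \<Longrightarrow> w \<in> V \<Longrightarrow> w \<notin> \<pi> ` {1..k} \<Longrightarrow> u \<noteq> w
    \<Longrightarrow> rank V \<pi> u < rank V \<pi> w \<Longrightarrow> thr E (\<pi> ` {1..k}) u w
    \<Longrightarrow> (u,w) \<in> (up_arcs V E \<pi>)\<^sup>*"
proof (induction k arbitrary: u w)
  case 0
  have "1 \<le> card V" using rank_V[OF vo 0(2)] by auto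
  moreover have "thr E {} u w" using 0(6) by simp
  then have "{u,w} \<in> snd (core_aux V E \<pi> 0)" using thr_empty by simp
  ultimately have "(u,w) \<in> up_arcs V E \<pi>" using edge_up[of u w V E \<pi> 0] 0(4,5) by simp
  then show ?case by (rule r_into_rtrancl)
next
  case (Suc k)
  let ?v = "\<pi> (Suc k)"
  let ?T = "\<pi> ` {1..k}"
  have inj: "inj_on \<pi> {1..card V}" using vo_facts[OF vo] by simp
  have T: "\<pi> ` {1..Suc k} = insert ?v ?T" by (auto simp: atLeastAtMostSuc_conv)
  have vnot: "?v \<notin> ?T" by (rule pi_notin[OF inj Suc.prems(1)])
  have vV: "?v \<in> V" using vo_facts(2)[OF vo] Suc.prems(1) by (metis atLeastAtMost_iff image_eqI le_add1 plus_1_eq_Suc)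
  have rv: "rank V \<pi> ?v = Suc k" using rank_pi[OF vo, of "Suc k"] Suc.prems(1) by simp
  have rw: "Suc k < rank V \<pi> w" using rank_gt[OF vo Suc.prems(2,3)] .
  have rwn: "rank V \<pi> w \<le> card V" using rank_V[OF vo Suc.prems(2)] by simp
  show ?case
  proof (cases "u \<in> \<pi> ` {1..Suc k}")
    case False
    have "{u,w} \<in> snd (core_aux V E \<pi> (Suc k))"
      using core_edge[OF inj, of "Suc k" u w E V] Suc.prems(1,4,3,6) False by blast
    then show ?thesis using edge_up[of u w V E \<pi> "Suc k"] rw rwn Suc.prems by auto
  next
    case True
    from thr_split[of E ?v ?T u w] Suc.prems(6) T
    have "thr E ?T u w \<or> ((u = ?v \<or> thr E ?T u ?v) \<and> thr E ?T ?v w)" by simp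
    then show ?thesis
    proof
      assume "thr E ?T u w"
      then show ?thesis using Suc.IH[of w u] Suc.prems T by auto
    next
      assume h: "(u = ?v \<or> thr E ?T u ?v) \<and> thr E ?T ?v w"
      have "{?v,w} \<in> snd (core_aux V E \<pi> k)"
        using core_edge[OF inj, of k ?v w] h Suc.prems vnot T by auto
      then have vw: "(?v,w) \<in> up_arcs V E \<pi>"
        using edge_up[of ?v w V E \<pi> k] Suc.prems rv rw T by auto
      have "(u,?v) \<in> (up_arcs V E \<pi>)\<^sup>*"
      proof (cases "u = ?v")
        case False
        then have uT: "u \<in> ?T" using True T by auto
        have "rank V \<pi> u \<le> k" using rank_le[OF vo uT] Suc.prems(1) by simp
        then show ?thesis using Suc.IH[of ?v u] h False Suc.prems(1) vV vnot rv by auto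
      qed simp
      then show ?thesis using vw by simp
    qed
  qed
qed


lemma partition_lemma:
  fixes n :: nat
  assumes "finite F"
  shows "(\<forall>K\<in>F. finite K \<and> 3 * card K < n) \<Longrightarrow>
    (\<forall>K1\<in>F. \<forall>K2\<in>F. K1 \<noteq> K2 \<longrightarrow> K1 \<inter> K2 = {}) \<Longrightarrow>
    finite R \<Longrightarrow> R \<inter> \<Union>F = {} \<Longrightarrow> 3 * card R \<le> 2 * n \<Longrightarrow>
    card R + card (\<Union>F) \<le> n \<Longrightarrow>
    \<exists>A B. A \<union> B = R \<union> \<Union>F \<and> A \<inter> B = {} \<and> R \<subseteq> A \<and> (\<forall>K\<in>F. K \<subseteq> A \<or> K \<subseteq> B)
       \<and> 3 * card A \<le> 2 * n \<and> 3 * card B \<le> 2 * n"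
  using assms
proof (induction F rule: finite_induct)
  case empty
  then show ?case by (intro exI[of _ R] exI[of _ "{}"]) auto
next
  case (insert K F)
  have "K \<inter> K' = {}" if "K' \<in> F" for K'
  proof -
    have "K \<noteq> K'" using that insert.hyps(2) by auto
    then show ?thesis using insert.prems(2)[rule_format, of K K'] that by simp
  qed
  then have disj: "K \<inter> \<Union>F = {}" by blast
  have finF: "finite (\<Union>F)" using insert.prems(1) insert.hyps(1) by auto
  have finK: "finite K" and sK: "3 * card K < n" using insert.prems(1) by auto
  have cU: "card (\<Union>(insert K F)) = card K + card (\<Union>F)"
    using card_Un_disjoint[OF finK finF disj] by simp
  have "card R + card (\<Union>F) \<le> n" using insert.prems(6) cU by simp
  moreover have RF: "R \<inter> \<Union>F = {}" using insert.prems(4) by auto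
  ultimately obtain A B where AB: "A \<union> B = R \<union> \<Union>F" "A \<inter> B = {}" "R \<subseteq> A"
      "\<forall>K\<in>F. K \<subseteq> A \<or> K \<subseteq> B" "3 * card A \<le> 2 * n" "3 * card B \<le> 2 * n"
  proof -
    have h1: "\<forall>K\<in>F. finite K \<and> 3 * card K < n" using insert.prems(1) by simp
    have h2: "\<forall>K1\<in>F. \<forall>K2\<in>F. K1 \<noteq> K2 \<longrightarrow> K1 \<inter> K2 = {}" using insert.prems(2) by simp
    show ?thesis using insert.IH[OF h1 h2 insert.prems(3) RF insert.prems(5) \<open>card R + card (\<Union>F) \<le> n\<close>] that by blast
  qed
  have "finite (A \<union> B)" using AB(1) finF insert.prems(3) by simp
  then have finA: "finite A" and finB: "finite B" by auto
  have cAB: "card A + card B = card R + card (\<Union>F)"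
  proof -
    have "card (A \<union> B) = card A + card B" by (rule card_Un_disjoint[OF finA finB AB(2)])
    moreover have "card (R \<union> \<Union>F) = card R + card (\<Union>F)"
      by (rule card_Un_disjoint[OF insert.prems(3) finF \<open>R \<inter> \<Union>F = {}\<close>])
    ultimately show ?thesis using AB(1) by simp
  qed
  have KA: "K \<inter> A = {}" and KB: "K \<inter> B = {}" using AB(1) disj insert.prems(4) by auto
  have tot: "card K + card A + card B \<le> n" using cAB insert.prems(6) cU by simp
  show ?case
  proof (cases "3 * (card A + card K) \<le> 2 * n")
    case True
    have "card (A \<union> K) = card A + card K" using card_Un_disjoint[OF finA finK] KA by auto
    then have c: "3 * card (A \<union> K) \<le> 2 * n" using True by simp
    have u: "(A \<union> K) \<union> B = R \<union> \<Union>(insert K F)" using AB(1) by auto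
    have d: "(A \<union> K) \<inter> B = {}" using AB(2) KB by auto
    have r: "R \<subseteq> A \<union> K" using AB(3) by auto
    have f: "\<forall>K'\<in>insert K F. K' \<subseteq> A \<union> K \<or> K' \<subseteq> B" using AB(4) by auto
    show ?thesis using u d r f c AB(6) by blast
  next
    case False
    then have "3 * (card B + card K) \<le> 2 * n" using tot sK by (simp add: distrib_left)
    moreover have "card (B \<union> K) = card B + card K" using card_Un_disjoint[OF finB finK] KB by auto
    ultimately have c: "3 * card (B \<union> K) \<le> 2 * n" by simp
    have u: "A \<union> (B \<union> K) = R \<union> \<Union>(insert K F)" using AB(1) by auto
    have d: "A \<inter> (B \<union> K) = {}" using AB(2) KA by auto
    have f: "\<forall>K'\<in>insert K F. K' \<subseteq> A \<or> K' \<subseteq> B \<union> K" using AB(4) by auto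
    show ?thesis using u d AB(3) f c AB(5) by blast
  qed
qed

lemma no_cross:
  assumes "A \<union> B = R \<union> \<Union>F" "A \<inter> B = {}" "R \<subseteq> A" "\<forall>K\<in>F. K \<subseteq> A \<or> K \<subseteq> B"
    "\<forall>K\<in>F. \<forall>x\<in>K. \<forall>r\<in>R. {x,r} \<notin> E"
    "\<forall>K1\<in>F. \<forall>K2\<in>F. \<forall>x1\<in>K1. \<forall>x2\<in>K2. {x1,x2} \<in> E \<longrightarrow> K1 = K2"
  shows "\<forall>a\<in>A. \<forall>b\<in>B. {a,b} \<notin> E"
proof (intro ballI notI)
  fix a b assume a: "a \<in> A" and b: "b \<in> B" and e: "{a,b} \<in> E"
  have "b \<notin> R" using b assms(2,3) by blast
  then obtain K2 where K2: "K2 \<in> F" "b \<in> K2" using b assms(1) by blast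
  have K2B: "K2 \<subseteq> B" using assms(4) K2 b assms(2) by blast
  show False
  proof (cases "a \<in> R")
    case True
    then show ?thesis using assms(5) K2 e by (metis insert_commute)
  next
    case False
    then obtain K1 where K1: "K1 \<in> F" "a \<in> K1" using a assms(1) by blast
    then have "K1 = K2" using assms(6) K2 e by blast
    then show ?thesis using K1 K2B a assms(2) by blast
  qed
qed


theorem mainTheorem2:
  fixes V :: "'a set" and E :: "'a set set" and S :: "'a set" and \<pi> :: "nat \<Rightarrow> 'a"
  assumes "simple_graph V E"
    and "connected_graph V E"
    and "min_balanced_separator V E S"
    and "vertex_order V \<pi>"
  shows "\<exists>Q. is_clique V (star_edges V E \<pi>) Q \<and> card S \<le> card Q \<and>
           3 * card {u \<in> V. Q \<subseteq> search_space V E \<pi> u} \<ge> card V"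
proof -
  let ?n = "card V"
  note vf = vo_facts[OF assms(4)]
  have inj: "inj_on \<pi> {1..?n}" and imV: "\<pi> ` {1..?n} = V" and finV: "finite V" using vf by auto
  show ?thesis
  proof (cases "V = {}")
    case True
    then have "S = {}" using assms(3) by (auto simp: min_balanced_separator_def balanced_separator_def)
    then show ?thesis using True by (intro exI[of _ "{}"]) (simp add: is_clique_def)
  next
    case False
    define big where "big k \<longleftrightarrow> (\<exists>y \<in> \<pi> ` {1..k}. ?n \<le> 3 * card (compo E (\<pi> ` {1..k}) y))" for k
    have bign: "big ?n"
    proof -
      obtain y where y: "y \<in> V" using False by blast
      have "compo E V y = V"
      proof
        show "compo E V y \<subseteq> V" by (auto simp: compo_def)
        show "V \<subseteq> compo E V y"
        proof
          fix z assume z: "z \<in> V"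
          have "(y,z) \<in> (adj_rel E)\<^sup>*" using assms(2) y z by (simp add: connected_graph_def)
          then have "y = z \<or> thr E V y z" by (rule conn_thr[OF assms(1)])
          then show "z \<in> compo E V y" using z by (auto simp: compo_def)
        qed
      qed
      then have "?n \<le> 3 * card (compo E V y)" by simp
      then show ?thesis unfolding big_def imV using y by blast
    qed
    define i where "i = (LEAST k. big k)"
    have bigi: "big i" unfolding i_def by (rule LeastI[of big, OF bign])
    have iln: "i \<le> ?n" unfolding i_def by (rule Least_le[of big, OF bign])
    have "\<not> big 0" by (simp add: big_def)
    then have "i \<noteq> 0" using bigi by (metis)
    then obtain j where ij: "i = Suc j" by (cases i) auto
    have "j < (LEAST k. big k)" using ij i_def by simp
    then have nbj: "\<not> big j" by (rule not_less_Least)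
    let ?Ti = "\<pi> ` {1..i}" and ?Tj = "\<pi> ` {1..j}"
    let ?p = "\<pi> i"
    have Ti: "?Ti = insert ?p ?Tj" using ij by (auto simp: atLeastAtMostSuc_conv)
    have pnot: "?p \<notin> ?Tj" using pi_notin[OF inj] iln ij by simp
    have TiV: "?Ti \<subseteq> V" using imV iln by auto
    have TjTi: "?Tj \<subseteq> ?Ti" using Ti by auto
    have pTi: "?p \<in> ?Ti" using Ti by auto
    have pV: "?p \<in> V" using pTi TiV by auto
    obtain y where y: "y \<in> ?Ti" "?n \<le> 3 * card (compo E ?Ti y)" using bigi big_def by auto
    have pin: "?p \<in> compo E ?Ti y"
    proof (rule ccontr)
      assume np: "?p \<notin> compo E ?Ti y"
      have yp: "y \<noteq> ?p" using np y(1) by (auto simp: compo_def)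
      then have yTj: "y \<in> ?Tj" using y(1) Ti by auto
      have sub: "compo E ?Ti y \<subseteq> compo E ?Tj y"
      proof
        fix z assume z: "z \<in> compo E ?Ti y"
        then have zp: "z \<noteq> ?p" using np by auto
        have zT: "z \<in> ?Tj" using z zp Ti by (auto simp: compo_def)
        have "z = y \<or> thr E ?Ti y z" using z by (simp add: compo_def)
        then have "z = y \<or> thr E ?Tj y z"
        proof
          assume t: "thr E ?Ti y z"
          from thr_split[of E ?p ?Tj y z] t Ti
          have "thr E ?Tj y z \<or> ((y = ?p \<or> thr E ?Tj y ?p) \<and> thr E ?Tj ?p z)" by simp
          then show ?thesis
          proof
            assume "(y = ?p \<or> thr E ?Tj y ?p) \<and> thr E ?Tj ?p z"
            then have "thr E ?Tj y ?p" using yp by simp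
            then have "thr E ?Ti y ?p" using TjTi by (rule thr_mono)
            then have "?p \<in> compo E ?Ti y" using pTi by (simp add: compo_def)
            then show ?thesis using np by simp
          qed simp
        qed simp
        then show "z \<in> compo E ?Tj y" using zT by (simp add: compo_def)
      qed
      have "finite (compo E ?Tj y)" by (simp add: compo_def)
      then have "card (compo E ?Ti y) \<le> card (compo E ?Tj y)" using sub by (rule card_mono)
      then have "big j" using y(2) yTj unfolding big_def by force
      then show False using nbj by simp
    qed
    define C where "C = compo E ?Ti ?p"
    have Ceq: "C = compo E ?Ti y" unfolding C_def
      by (rule comp_eq[OF pTi y(1) pin])
    have Cbig: "?n \<le> 3 * card C" using Ceq y(2) by simp
    have CTi: "C \<subseteq> ?Ti" by (auto simp: C_def compo_def)
    have CV: "C \<subseteq> V" using CTi TiV by auto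
    have pC: "?p \<in> C" using pTi by (simp add: C_def compo_def)
    have Cthr: "c = ?p \<or> thr E ?Ti ?p c" if "c \<in> C" for c using that by (simp add: C_def compo_def)
    define N where "N = {w \<in> V - ?Ti. \<exists>c\<in>C. {c,w} \<in> E}"
    define Q where "Q = insert ?p N"
    have pN: "thr E ?Ti ?p w" if wN: "w \<in> N" for w
    proof -
      obtain c where c: "c \<in> C" "{c,w} \<in> E" using wN by (auto simp: N_def)
      show ?thesis using Cthr[OF c(1)]
      proof
        assume "c = ?p" then show ?thesis using c(2) by (simp add: thr.base)
      next
        assume "thr E ?Ti ?p c" then show ?thesis using c CTi by (blast intro: thr.step)
      qed
    qed
    have NV: "N \<subseteq> V - ?Ti" by (auto simp: N_def)
    have Suc_le: "Suc i \<le> ?n" if "w \<in> N" for w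
    proof (rule ccontr)
      assume "\<not> Suc i \<le> ?n"
      then have "{1..?n} \<subseteq> {1..i}" by auto
      then have "V \<subseteq> ?Ti" using imV by blast
      then show False using that NV by auto
    qed
    have pw_edge: "{?p, w} \<in> star_edges V E \<pi>" if w: "w \<in> N" for w
    proof -
      have t: "thr E ?Ti ?p w" by (rule pN[OF w])
      from thr_split[of E ?p ?Tj ?p w] t Ti
      have "thr E ?Tj ?p w" by auto
      moreover have "w \<notin> ?Tj" "?p \<noteq> w" using w NV TjTi pTi by auto
      ultimately have "{?p,w} \<in> snd (core_aux V E \<pi> j)"
        using core_edge[OF inj, of j ?p w E V] ij iln pnot by auto
      then show ?thesis unfolding star_edges_def core_graph_def using ij iln
        by (intro UN_I[of i]) auto
    qed
    have ww_edge: "{w, w'} \<in> star_edges V E \<pi>" if "w \<in> N" "w' \<in> N" "w \<noteq> w'" for w w'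
    proof -
      have "thr E ?Ti w ?p" using thr_sym[OF pN[OF that(1)]] .
      then have t: "thr E ?Ti w w'" using thr_trans[OF pN[OF that(2)]] pTi by blast
      have "{w,w'} \<in> snd (core_aux V E \<pi> i)"
        using core_edge[OF inj, of i w w' E V] t that NV iln by auto
      then show ?thesis unfolding star_edges_def core_graph_def using Suc_le[OF that(1)]
        by (intro UN_I[of "Suc i"]) auto
    qed
    have clique: "is_clique V (star_edges V E \<pi>) Q"
      unfolding is_clique_def
    proof (intro conjI ballI impI)
      show "Q \<subseteq> V" using pV NV by (auto simp: Q_def)
      fix x y assume x: "x \<in> Q" and y: "y \<in> Q" and xy: "x \<noteq> y"
      show "{x,y} \<in> star_edges V E \<pi>"
      proof (cases "x = ?p")
        case True
        then show ?thesis using y xy pw_edge by (auto simp: Q_def)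
      next
        case False
        then have xN: "x \<in> N" using x by (simp add: Q_def)
        show ?thesis
        proof (cases "y = ?p")
          case True
          then show ?thesis using pw_edge[OF xN] by (simp add: insert_commute)
        next
          case False
          then have "y \<in> N" using y by (simp add: Q_def)
          then show ?thesis using ww_edge xN xy by simp
        qed
      qed
    qed
    have rp: "rank V \<pi> ?p = i" using rank_pi[OF assms(4), of i] iln ij by simp
    have reach: "Q \<subseteq> search_space V E \<pi> u" if u: "u \<in> C" for u
    proof
      fix q assume q: "q \<in> Q"
      have uTi: "u \<in> ?Ti" using u CTi by auto
      have ru: "rank V \<pi> u \<le> i" using rank_le[OF assms(4) uTi iln] .
      have "(u,q) \<in> (up_arcs V E \<pi>)\<^sup>*"
      proof (cases "q = ?p")
        case True
        show ?thesis
        proof (cases "u = ?p")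
          case False
          then have "thr E ?Ti ?p u" using Cthr[OF u] by simp
          then have t: "thr E ?Ti u ?p" by (rule thr_sym)
          from thr_split[of E ?p ?Tj u ?p] t Ti False
          have t2: "thr E ?Tj u ?p" by auto
          have "u \<in> ?Tj" using uTi False Ti by auto
          then have "rank V \<pi> u \<le> j" using rank_le[OF assms(4)] ij iln by simp
          then have "rank V \<pi> u < rank V \<pi> ?p" using rp ij by simp
          then show ?thesis using up_path[OF assms(4), of j ?p u E] t2 pV pnot False True ij iln
            by auto
        qed (simp add: True)
      next
        case False
        then have qN: "q \<in> N" using q Q_def by simp
        have tq: "thr E ?Ti ?p q" by (rule pN[OF qN])
        have t: "thr E ?Ti u q"
        proof (cases "u = ?p")
          case False
          then have "thr E ?Ti ?p u" using Cthr[OF u] by simp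
          then have "thr E ?Ti u ?p" by (rule thr_sym)
          then show ?thesis using thr_trans[OF tq] pTi by blast
        qed (use tq in auto)
        have "i < rank V \<pi> q" using rank_gt[OF assms(4)] qN NV by auto
        moreover have "u \<noteq> q" using uTi qN NV by auto
        ultimately show ?thesis using up_path[OF assms(4), of i q u E] t iln qN NV ru by auto
      qed
      then show "q \<in> search_space V E \<pi> u" by (simp add: search_space_def)
    qed
    have "C \<subseteq> {u \<in> V. Q \<subseteq> search_space V E \<pi> u}" using reach CV by auto
    then have "card C \<le> card {u \<in> V. Q \<subseteq> search_space V E \<pi> u}"
      by (rule card_mono[rotated]) (simp add: finV)
    then have count: "?n \<le> 3 * card {u \<in> V. Q \<subseteq> search_space V E \<pi> u}" using Cbig by linarith
    define X where "X = C - {?p}"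
    define F where "F = (\<lambda>x. compo E ?Tj x) ` X"
    define R where "R = V - C - N"
    have XTj: "X \<subseteq> ?Tj" using CTi Ti by (auto simp: X_def)
    have XC: "X \<subseteq> C" by (auto simp: X_def)
    have Xsub: "compo E ?Tj x \<subseteq> X" if xX: "x \<in> X" for x
    proof
      fix w assume w: "w \<in> compo E ?Tj x"
      have wTj: "w \<in> ?Tj" using w by (simp add: compo_def)
      have "x \<in> C" "x \<noteq> ?p" using xX X_def by auto
      then have tx: "thr E ?Ti ?p x" using Cthr by blast
      have xTi: "x \<in> ?Ti" using xX XTj TjTi by auto
      have "w = x \<or> thr E ?Tj x w" using w by (simp add: compo_def)
      then have "thr E ?Ti ?p w"
      proof
        assume "thr E ?Tj x w"
        then have "thr E ?Ti x w" using TjTi by (rule thr_mono)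
        then show ?thesis using thr_trans[OF _ tx xTi] by blast
      qed (use tx in auto)
      then have "w \<in> C" using wTj TjTi by (auto simp: C_def compo_def)
      moreover have "w \<noteq> ?p" proof assume "w = ?p" then show False using wTj pnot by simp qed
      ultimately show "w \<in> X" by (simp add: X_def)
    qed
    have UF: "\<Union>F = X"
    proof
      show "\<Union>F \<subseteq> X" using Xsub by (auto simp: F_def)
      show "X \<subseteq> \<Union>F"
      proof
        fix x assume x: "x \<in> X"
        then have "x \<in> compo E ?Tj x" using XTj by (auto simp: compo_def)
        then show "x \<in> \<Union>F" using x by (auto simp: F_def)
      qed
    qed
    have compeq2: "compo E ?Tj z = compo E ?Tj x" if "x \<in> X" "z \<in> compo E ?Tj x" for x z
    proof -
      have "z \<in> ?Tj" using that(2) by (simp add: compo_def)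
      then show ?thesis using comp_eq[of z ?Tj x E] that XTj by auto
    qed
    have Fdisj: "\<forall>K1\<in>F. \<forall>K2\<in>F. K1 \<noteq> K2 \<longrightarrow> K1 \<inter> K2 = {}"
    proof (intro ballI impI)
      fix K1 K2 assume K1: "K1 \<in> F" and K2: "K2 \<in> F" and ne: "K1 \<noteq> K2"
      obtain x1 where x1: "x1 \<in> X" "K1 = compo E ?Tj x1" using K1 F_def by auto
      obtain x2 where x2: "x2 \<in> X" "K2 = compo E ?Tj x2" using K2 F_def by auto
      show "K1 \<inter> K2 = {}"
      proof (rule ccontr)
        assume "K1 \<inter> K2 \<noteq> {}"
        then obtain z where "z \<in> K1" "z \<in> K2" by auto
        note zz = this
        have "compo E ?Tj z = K1" using compeq2[OF x1(1), of z] zz(1) x1(2) by simp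
        moreover have "compo E ?Tj z = K2" using compeq2[OF x2(1), of z] zz(2) x2(2) by simp
        ultimately have "K1 = K2" by simp
        then show False using ne by simp
      qed
    qed
    have finTj: "finite ?Tj" by simp
    have Fsize: "\<forall>K\<in>F. finite K \<and> 3 * card K < ?n"
    proof
      fix K assume "K \<in> F"
      then obtain x where x: "x \<in> X" "K = compo E ?Tj x" using F_def by auto
      have "finite K" using x(2) finTj by (auto simp: compo_def)
      moreover have "x \<in> ?Tj" using x(1) XTj by auto
      then have "\<not> ?n \<le> 3 * card K" using nbj unfolding big_def x(2) by auto
      ultimately show "finite K \<and> 3 * card K < ?n" by simp
    qed
    have finF: "finite F" unfolding F_def by (rule finite_imageI[OF finite_subset[OF XTj finTj]])
    have finR: "finite R" using finV by (simp add: R_def)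
    have RF: "R \<inter> \<Union>F = {}" using UF XC by (auto simp: R_def)
    have "card (V - C) = ?n - card C" using card_Diff_subset[OF _ CV] finV finite_subset[OF CV] by simp
    moreover have "card R \<le> card (V - C)" using finV by (intro card_mono) (auto simp: R_def)
    ultimately have Rsz: "3 * card R \<le> 2 * ?n" using Cbig by linarith
    have finX: "finite X" by (rule finite_subset[OF XTj finTj])
    have "card (R \<union> X) = card R + card X" using card_Un_disjoint[OF finR finX] RF UF by simp
    moreover have "card (R \<union> X) \<le> ?n" using finV XC CV by (intro card_mono) (auto simp: R_def)
    ultimately have RXsz: "card R + card (\<Union>F) \<le> ?n" using UF by simp
    obtain A B where AB: "A \<union> B = R \<union> \<Union>F" "A \<inter> B = {}" "R \<subseteq> A" "\<forall>K\<in>F. K \<subseteq> A \<or> K \<subseteq> B"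
      "3 * card A \<le> 2 * ?n" "3 * card B \<le> 2 * ?n"
      using partition_lemma[OF finF Fsize Fdisj finR RF Rsz RXsz] by blast
    have e5: "\<forall>K\<in>F. \<forall>x\<in>K. \<forall>r\<in>R. {x,r} \<notin> E"
    proof (intro ballI notI)
      fix K x r assume K: "K \<in> F" and x: "x \<in> K" and r: "r \<in> R" and e: "{x,r} \<in> E"
      have xX: "x \<in> X" using K x UF by auto
      then have xC: "x \<in> C" and xp: "x \<noteq> ?p" using X_def by auto
      have rV: "r \<in> V" "r \<notin> C" "r \<notin> N" using r R_def by auto
      show False
      proof (cases "r \<in> ?Ti")
        case True
        have "thr E ?Ti ?p x" using Cthr[OF xC] xp by simp
        then have "thr E ?Ti ?p r" using e xC CTi by (blast intro: thr.step)
        then have "r \<in> C" using True by (simp add: C_def compo_def)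
        then show False using rV by simp
      next
        case False
        then have "r \<in> N" using rV(1) xC e by (auto simp: N_def)
        then show False using rV by simp
      qed
    qed
    have e6: "\<forall>K1\<in>F. \<forall>K2\<in>F. \<forall>x1\<in>K1. \<forall>x2\<in>K2. {x1,x2} \<in> E \<longrightarrow> K1 = K2"
    proof (intro ballI impI)
      fix K1 K2 x1 x2 assume K1: "K1 \<in> F" and K2: "K2 \<in> F" and x1: "x1 \<in> K1" and x2: "x2 \<in> K2"
        and e: "{x1,x2} \<in> E"
      obtain z1 where z1: "z1 \<in> X" "K1 = compo E ?Tj z1" using K1 F_def by auto
      have K1eq: "K1 = compo E ?Tj x1" using compeq2[OF z1(1)] x1 z1(2) by simp
      have x2T: "x2 \<in> ?Tj" using x2 K2 UF XTj by auto
      have "x2 \<in> K1" using K1eq x2T e by (simp add: compo_def thr.base)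
      then show "K1 = K2" using Fdisj K1 K2 x2 by blast
    qed
    have nc: "\<forall>a\<in>A. \<forall>b\<in>B. {a,b} \<notin> E" by (rule no_cross[OF AB(1-4) e5 e6])
    have VQ: "V - Q = R \<union> \<Union>F" using UF CV NV CTi pC by (auto simp: Q_def R_def X_def)
    have "balanced_separator V E Q"
      unfolding balanced_separator_def
      using clique AB(2,5,6) nc VQ AB(1) by (auto simp: is_clique_def)
    then have "card S \<le> card Q" using assms(3) by (simp add: min_balanced_separator_def)
    then show ?thesis using clique count by blast
  qed
qed

end
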